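(* Let $\alpha$ be an expanding algebraic number, $\mathcal{D}\subset\mathbb{Z}[\alpha]$ a standard digit set for $\alpha$, and $m\in\mathbb{Z}$ with $\mathcal{D}\subset\alpha^m\mathbb{Z}[\alpha^{-1}]$. Let $x,y\in\Lambda_{\alpha,m}$ and $k\ge0$ with $x-y\in\Lambda_{\alpha,m-k}$. Then $\alpha^{-k}(T_\alpha^{-k}(x)\cap\Lambda_{\alpha,m})-x=\alpha^{-k}(T_\alpha^{-k}(y)\cap\Lambda_{\alpha,m})-y$.
   Context: $\alpha$ is an algebraic number all of whose conjugates have modulus $>1$. $\mathcal{D}$ standard: complete residue system of $\mathbb{Z}[\alpha]/\alpha\mathbb{Z}[\alpha]$. $\Lambda_{\alpha,k}=\mathbb{Z}[\alpha]\cap\alpha^{k-1}\mathbb{Z}[\alpha^{-1}]$. $T_\alpha:\mathbb{Z}[\alpha]\to\mathbb{Z}[\alpha]$, $x\mapsto\alpha^{-1}(x-d)$ with $d\in\mathcal{D}$ the unique digit such that $\alpha^{-1}(x-d)\in\mathbb{Z}[\alpha]$; $T_\alpha^{-k}(x)$ is the preimage set of $x$ under the $k$-th iterate. Sets are subsets of $\mathbb{Q}(\alpha)$, with $\alpha^{-k}S-x=\{\alpha^{-k}s-x:s\in S\}$. *)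

theory Defs
  imports "HOL-Computational_Algebra.Computational_Algebra"
begin

definition Zring :: "complex \<Rightarrow> complex set" where
  "Zring \<beta> = {poly (map_poly of_int p) \<beta> | p :: int poly. True}"

text \<open>Conjugates of an algebraic number: the complex roots of its minimal polynomial
  over Q (any irreducible rational polynomial vanishing at alpha).\<close>
definition conjugates :: "complex \<Rightarrow> complex set" where
  "conjugates \<alpha> = {z. \<exists>p :: rat poly. irreducible p \<and> poly (map_poly of_rat p) \<alpha> = 0
                        \<and> poly (map_poly of_rat p) z = 0}"

definition expanding :: "complex \<Rightarrow> bool" where
  "expanding \<alpha> \<longleftrightarrow> algebraic \<alpha> \<and> (\<forall>z\<in>conjugates \<alpha>. norm z > 1)"

definition standard_digits :: "complex \<Rightarrow> complex set \<Rightarrow> bool" where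
  "standard_digits \<alpha> D \<longleftrightarrow> D \<subseteq> Zring \<alpha> \<and>
     (\<forall>x\<in>Zring \<alpha>. \<exists>!d. d \<in> D \<and> x - d \<in> (\<lambda>z. \<alpha> * z) ` Zring \<alpha>)"

definition Lambda :: "complex \<Rightarrow> int \<Rightarrow> complex set" where
  "Lambda \<alpha> k = Zring \<alpha> \<inter> (\<lambda>z. \<alpha> powi (k - 1) * z) ` Zring (inverse \<alpha>)"

definition digit_of :: "complex \<Rightarrow> complex set \<Rightarrow> complex \<Rightarrow> complex" where
  "digit_of \<alpha> D x = (THE d. d \<in> D \<and> (x - d) / \<alpha> \<in> Zring \<alpha>)"

definition Tmap :: "complex \<Rightarrow> complex set \<Rightarrow> complex \<Rightarrow> complex" where
  "Tmap \<alpha> D x = (x - digit_of \<alpha> D x) / \<alpha>"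

definition Tinv :: "complex \<Rightarrow> complex set \<Rightarrow> nat \<Rightarrow> complex \<Rightarrow> complex set" where
  "Tinv \<alpha> D k x = {z \<in> Zring \<alpha>. (Tmap \<alpha> D ^^ k) z = x}"

end

theory Submission
  imports Defs
begin

lemma Zring_add: assumes "a \<in> Zring b" "c \<in> Zring b" shows "a + c \<in> Zring b"
proof -
  from assms obtain p q :: "int poly" where a: "a = poly (map_poly of_int p) b"
    and c: "c = poly (map_poly of_int q) b" unfolding Zring_def by auto
  have "map_poly (of_int :: int \<Rightarrow> complex) (p + q) = map_poly of_int p + map_poly of_int q"
    by (rule poly_eqI) (simp add: coeff_map_poly)
  hence "a + c = poly (map_poly of_int (p + q)) b" by (simp add: a c)
  thus ?thesis unfolding Zring_def by blast
qed

lemma Zring_uminus: assumes "a \<in> Zring b" shows "- a \<in> Zring b"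
proof -
  from assms obtain p :: "int poly" where a: "a = poly (map_poly of_int p) b"
    unfolding Zring_def by auto
  have "map_poly (of_int :: int \<Rightarrow> complex) (- p) = - map_poly of_int p"
    by (rule poly_eqI) (simp add: coeff_map_poly)
  hence "- a = poly (map_poly of_int (- p)) b" by (simp add: a)
  thus ?thesis unfolding Zring_def by blast
qed

lemma Zring_diff: assumes "a \<in> Zring b" "c \<in> Zring b" shows "a - c \<in> Zring b"
  using Zring_add[OF assms(1) Zring_uminus[OF assms(2)]] by simp

lemma Zring_multb: assumes "a \<in> Zring b" shows "b * a \<in> Zring b"
proof -
  from assms obtain p :: "int poly" where a: "a = poly (map_poly of_int p) b"
    unfolding Zring_def by auto
  have "b * a = poly (map_poly of_int (pCons 0 p)) b" by (simp add: a map_poly_pCons)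
  thus ?thesis unfolding Zring_def by blast
qed

lemma Zring_multpow: assumes "a \<in> Zring b" shows "b ^ n * a \<in> Zring b"
  using assms by (induction n) (auto simp: mult.assoc dest: Zring_multb)

lemma expanding_nz: assumes "expanding \<alpha>" shows "\<alpha> \<noteq> 0"
proof
  assume h: "\<alpha> = 0"
  have "irreducible [:0, 1::rat:]" by (rule irreducible_linear_field_poly) simp
  hence "0 \<in> conjugates \<alpha>" unfolding conjugates_def h
    by (intro CollectI exI[of _ "[:0,1:]"]) (simp add: map_poly_pCons)
  with assms show False unfolding expanding_def by auto
qed

lemma digit_shift:
  assumes "\<alpha> \<noteq> 0" "u \<in> Zring \<alpha>"
  shows "digit_of \<alpha> D (s + \<alpha> * u) = digit_of \<alpha> D s"
proof -
  have "\<And>d. (s + \<alpha> * u - d) / \<alpha> = (s - d) / \<alpha> + u" using assms(1)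
    by (simp add: field_simps)
  hence "\<And>d. ((s + \<alpha> * u - d) / \<alpha> \<in> Zring \<alpha>) = ((s - d) / \<alpha> \<in> Zring \<alpha>)"
    using Zring_add Zring_diff assms(2) by (metis add_diff_cancel_right')
  thus ?thesis unfolding digit_of_def by simp
qed

lemma Tmap_Zring:
  assumes "\<alpha> \<noteq> 0" "standard_digits \<alpha> D" "s \<in> Zring \<alpha>"
  shows "Tmap \<alpha> D s \<in> Zring \<alpha>"
proof -
  define P where "P d' \<longleftrightarrow> d' \<in> D \<and> (s - d') / \<alpha> \<in> Zring \<alpha>" for d'
  have eq: "\<And>d'. ((s - d') / \<alpha> \<in> Zring \<alpha>) = (s - d' \<in> (\<lambda>z. \<alpha> * z) ` Zring \<alpha>)"
  proof -
    fix d' show "((s - d') / \<alpha> \<in> Zring \<alpha>) = (s - d' \<in> (\<lambda>z. \<alpha> * z) ` Zring \<alpha>)"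
    proof
      assume h: "(s - d') / \<alpha> \<in> Zring \<alpha>"
      have "s - d' = \<alpha> * ((s - d') / \<alpha>)" using assms(1) by simp
      thus "s - d' \<in> (\<lambda>z. \<alpha> * z) ` Zring \<alpha>" using h by (rule image_eqI)
    next
      assume "s - d' \<in> (\<lambda>z. \<alpha> * z) ` Zring \<alpha>"
      then obtain z where "z \<in> Zring \<alpha>" "s - d' = \<alpha> * z" by blast
      thus "(s - d') / \<alpha> \<in> Zring \<alpha>" using assms(1) by simp
    qed
  qed
  have "\<exists>!d. d \<in> D \<and> s - d \<in> (\<lambda>z. \<alpha> * z) ` Zring \<alpha>"
    using assms(2,3) unfolding standard_digits_def by blast
  hence ex: "\<exists>!d. P d" unfolding P_def eq .
  have "P (THE d. P d)" using theI'[OF ex] .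
  moreover have "digit_of \<alpha> D s = (THE d. P d)" unfolding digit_of_def P_def ..
  ultimately show ?thesis unfolding Tmap_def P_def by simp
qed

lemma Tpow_shift:
  assumes "\<alpha> \<noteq> 0" "standard_digits \<alpha> D"
  shows "s \<in> Zring \<alpha> \<Longrightarrow> w \<in> Zring \<alpha> \<Longrightarrow>
    (Tmap \<alpha> D ^^ k) (s + \<alpha> ^ k * w) = (Tmap \<alpha> D ^^ k) s + w"
proof (induction k arbitrary: s)
  case 0 then show ?case by simp
next
  case (Suc k)
  have u: "\<alpha> ^ k * w \<in> Zring \<alpha>" using Zring_multpow Suc.prems by blast
  have "Tmap \<alpha> D (s + \<alpha> ^ Suc k * w) = Tmap \<alpha> D s + \<alpha> ^ k * w"
    using digit_shift[OF assms(1) u, of D s] assms(1)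
    unfolding Tmap_def by (simp add: field_simps)
  moreover have "Tmap \<alpha> D s \<in> Zring \<alpha>" using Tmap_Zring assms Suc.prems by blast
  ultimately show ?case using Suc.IH Suc.prems
    by (simp add: funpow_Suc_right del: funpow.simps)
qed

lemma one_dir:
  fixes \<alpha> :: complex and D :: "complex set" and m :: int and x y :: complex and k :: nat
  assumes "\<alpha> \<noteq> 0"
    and "standard_digits \<alpha> D"
    and "x \<in> Lambda \<alpha> m" and "y \<in> Lambda \<alpha> m"
    and "y - x \<in> Lambda \<alpha> (m - int k)"
  shows "(\<lambda>s. \<alpha> powi (- int k) * s - x) ` (Tinv \<alpha> D k x \<inter> Lambda \<alpha> m)
       \<subseteq> (\<lambda>s. \<alpha> powi (- int k) * s - y) ` (Tinv \<alpha> D k y \<inter> Lambda \<alpha> m)"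
proof
  fix t assume "t \<in> (\<lambda>s. \<alpha> powi (- int k) * s - x) ` (Tinv \<alpha> D k x \<inter> Lambda \<alpha> m)"
  then obtain s where s: "s \<in> Zring \<alpha>" "(Tmap \<alpha> D ^^ k) s = x" "s \<in> Lambda \<alpha> m"
    and t: "t = \<alpha> powi (- int k) * s - x"
    unfolding Tinv_def by auto
  from assms(5) obtain w where w: "y - x \<in> Zring \<alpha>" "w \<in> Zring (inverse \<alpha>)"
    "y - x = \<alpha> powi (m - int k - 1) * w" unfolding Lambda_def by auto
  from s(3) obtain v where v: "v \<in> Zring (inverse \<alpha>)" "s = \<alpha> powi (m - 1) * v"
    unfolding Lambda_def by auto
  define s' where "s' = s + \<alpha> ^ k * (y - x)"
  have z: "s' \<in> Zring \<alpha>" unfolding s'_def using Zring_add Zring_multpow s(1) w(1) by blast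
  have T: "(Tmap \<alpha> D ^^ k) s' = y" unfolding s'_def
    using Tpow_shift[OF assms(1,2) s(1) w(1)] s(2) by simp
  have pk: "\<alpha> ^ k * \<alpha> powi (m - int k - 1) = \<alpha> powi (m - 1)"
    using assms(1) by (simp add: power_int_add[symmetric] flip: power_int_of_nat)
  have "s' = \<alpha> powi (m - 1) * (v + w)" unfolding s'_def v(2) w(3)
    using pk by (simp add: algebra_simps flip: mult.assoc)
  hence "s' \<in> Lambda \<alpha> m" using z Zring_add[OF v(1) w(2)] unfolding Lambda_def by blast
  have teq: "t = \<alpha> powi (- int k) * s' - y"
  proof -
    have inv: "\<alpha> powi (- int k) * \<alpha> ^ k = 1"
      using assms(1) by (simp add: power_int_minus)
    have "\<alpha> powi (- int k) * s' - y
        = \<alpha> powi (- int k) * s + (\<alpha> powi (- int k) * \<alpha> ^ k) * (y - x) - y"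
      unfolding s'_def by (simp only: distrib_left mult.assoc)
    also have "\<dots> = t" unfolding inv t by simp
    finally show ?thesis by simp
  qed
  show "t \<in> (\<lambda>s. \<alpha> powi (- int k) * s - y) ` (Tinv \<alpha> D k y \<inter> Lambda \<alpha> m)"
  proof (rule image_eqI)
    show "s' \<in> Tinv \<alpha> D k y \<inter> Lambda \<alpha> m"
      using z T \<open>s' \<in> Lambda \<alpha> m\<close> unfolding Tinv_def by simp
  qed (rule teq)
qed

lemma Lambda_neg: "a \<in> Lambda \<alpha> j \<Longrightarrow> - a \<in> Lambda \<alpha> j"
  unfolding Lambda_def using Zring_uminus
  by (auto simp: image_iff) (metis mult_minus_right)

theorem lemma6p12:
  fixes \<alpha> :: complex and D :: "complex set" and m :: int and x y :: complex and k :: nat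
  assumes "expanding \<alpha>"
    and "standard_digits \<alpha> D"
    and "D \<subseteq> (\<lambda>z. \<alpha> powi m * z) ` Zring (inverse \<alpha>)"
    and "x \<in> Lambda \<alpha> m" and "y \<in> Lambda \<alpha> m"
    and "x - y \<in> Lambda \<alpha> (m - int k)"
  shows "(\<lambda>s. \<alpha> powi (- int k) * s - x) ` (Tinv \<alpha> D k x \<inter> Lambda \<alpha> m)
       = (\<lambda>s. \<alpha> powi (- int k) * s - y) ` (Tinv \<alpha> D k y \<inter> Lambda \<alpha> m)"
proof -
  have nz: "\<alpha> \<noteq> 0" using expanding_nz assms(1) .
  have "y - x \<in> Lambda \<alpha> (m - int k)" using Lambda_neg[OF assms(6)] by simp
  show ?thesis
    by (rule equalityI; rule one_dir) (use nz assms \<open>y - x \<in> _\<close> in auto)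
qed

end
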